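(* Let $G$ be a map graph with a corresponding planar bipartite graph $B$, let $\ell\in\mathbb{N}$, let $\mathcal{D}=(T,\beta_{\mathcal{D}})$ be a tree decomposition of $B$ of width less than $\ell$, and let $\mathcal{D}'=(T,\beta_{\mathcal{D}'})$ be the pair defined by $\beta_{\mathcal{D}'}(t)=(\beta_{\mathcal{D}}(t)\cap V(G))\cup\bigcup_{s\in\beta_{\mathcal{D}}(t)\cap S(G)}\big(N_B(s)\cap\gamma_{\mathcal{D}}(t)\big)$ for every node $t\in V(T)$. Then $\mathcal{D}'$ is a tree decomposition of $G$.
   Context: All graphs are finite and simple. For a bipartite graph $B$ with bipartition $V(B)=W\uplus U$, the half-square of $B$ is the graph with vertex set $W$ in which two vertices are adjacent iff they are at distance exactly $2$ in $B$. A graph $G$ is a map graph iff it is the half-square of some planar bipartite graph $B$; such a $B$ (with $W=V(G)$) is a corresponding planar bipartite graph, and the vertices of $U$ are called special vertices, denoted $S(G)$. A tree decomposition of a graph $H$ is a pair $(T,\beta)$ with $T$ a rooted tree and $\beta:V(T)\to 2^{V(H)}$ such that every vertex lies in some bag, every edge has both endpoints in some bag, and for every vertex $v$ the nodes whose bags contain $v$ induce a connected subtree; its width is the maximum bag size minus one. For a node $t$, $\gamma_{\mathcal{D}}(t)$ denotes the union of the bags $\beta_{\mathcal{D}}(t')$ over $t$ and all its descendants $t'$. *)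

theory Defs
  imports "HOL-Analysis.Analysis"
begin

definition simple_graph :: "'a set \<Rightarrow> 'a set set \<Rightarrow> bool" where
  "simple_graph V E \<longleftrightarrow> finite V \<and> (\<forall>e\<in>E. e \<subseteq> V \<and> card e = 2)"

definition nbhd :: "'a set set \<Rightarrow> 'a \<Rightarrow> 'a set" where
  "nbhd E v = {u. {v, u} \<in> E}"

definition is_walk :: "'a set \<Rightarrow> 'a set set \<Rightarrow> 'a list \<Rightarrow> bool" where
  "is_walk V E p \<longleftrightarrow> p \<noteq> [] \<and> set p \<subseteq> V \<and> (\<forall>i. Suc i < length p \<longrightarrow> {p ! i, p ! Suc i} \<in> E)"

definition is_path_between :: "'a set \<Rightarrow> 'a set set \<Rightarrow> 'a \<Rightarrow> 'a \<Rightarrow> 'a list \<Rightarrow> bool" where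
  "is_path_between V E u v p \<longleftrightarrow> is_walk V E p \<and> distinct p \<and> hd p = u \<and> last p = v"

definition induces_connected :: "'a set \<Rightarrow> 'a set set \<Rightarrow> 'a set \<Rightarrow> bool" where
  "induces_connected V E X \<longleftrightarrow> X \<subseteq> V \<and>
     (\<forall>u\<in>X. \<forall>v\<in>X. \<exists>p. is_walk X {e\<in>E. e \<subseteq> X} p \<and> hd p = u \<and> last p = v)"

definition is_tree :: "'a set \<Rightarrow> 'a set set \<Rightarrow> bool" where
  "is_tree N ET \<longleftrightarrow> simple_graph N ET \<and> N \<noteq> {} \<and>
     (\<forall>u\<in>N. \<forall>v\<in>N. \<exists>!p. is_path_between N ET u v p)"

definition descendants :: "'a set \<Rightarrow> 'a set set \<Rightarrow> 'a \<Rightarrow> 'a \<Rightarrow> 'a set" where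
  "descendants N ET r t = {t'\<in>N. \<exists>p. is_path_between N ET r t' p \<and> t \<in> set p}"

definition gamma :: "'a set \<Rightarrow> 'a set set \<Rightarrow> 'a \<Rightarrow> ('a \<Rightarrow> 'b set) \<Rightarrow> 'a \<Rightarrow> 'b set" where
  "gamma N ET r \<beta> t = (\<Union>t'\<in>descendants N ET r t. \<beta> t')"

definition tree_decomposition ::
  "'v set \<Rightarrow> 'v set set \<Rightarrow> 't set \<Rightarrow> 't set set \<Rightarrow> 't \<Rightarrow> ('t \<Rightarrow> 'v set) \<Rightarrow> bool" where
  "tree_decomposition V E N ET r \<beta> \<longleftrightarrow>
     is_tree N ET \<and> r \<in> N \<and>
     (\<forall>t\<in>N. \<beta> t \<subseteq> V) \<and>
     (\<forall>v\<in>V. \<exists>t\<in>N. v \<in> \<beta> t) \<and>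
     (\<forall>e\<in>E. \<exists>t\<in>N. e \<subseteq> \<beta> t) \<and>
     (\<forall>v\<in>V. induces_connected N ET {t\<in>N. v \<in> \<beta> t})"

definition td_width :: "'t set \<Rightarrow> ('t \<Rightarrow> 'v set) \<Rightarrow> int" where
  "td_width N \<beta> = int (Max ((\<lambda>t. card (\<beta> t)) ` N)) - 1"

definition planar_graph :: "'a set \<Rightarrow> 'a set set \<Rightarrow> bool" where
  "planar_graph V E \<longleftrightarrow> simple_graph V E \<and>
     (\<exists>(f :: 'a \<Rightarrow> complex) (g :: 'a set \<Rightarrow> real \<Rightarrow> complex).
        inj_on f V \<and>
        (\<forall>e\<in>E. arc (g e) \<and> f ` e = {pathstart (g e), pathfinish (g e)} \<and>
                 path_image (g e) \<inter> f ` V = f ` e) \<and>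
        (\<forall>e\<in>E. \<forall>e'\<in>E. e \<noteq> e' \<longrightarrow> path_image (g e) \<inter> path_image (g e') \<subseteq> f ` (e \<inter> e')))"

definition bipartite_with :: "'a set \<Rightarrow> 'a set set \<Rightarrow> 'a set \<Rightarrow> 'a set \<Rightarrow> bool" where
  "bipartite_with V E W U \<longleftrightarrow> simple_graph V E \<and> V = W \<union> U \<and> W \<inter> U = {} \<and>
     (\<forall>e\<in>E. \<exists>w\<in>W. \<exists>u\<in>U. e = {w, u})"

text \<open>Edges of the half-square of B on W: pairs at distance exactly 2 in B.\<close>
definition half_square_edges :: "'a set set \<Rightarrow> 'a set \<Rightarrow> 'a set set" where
  "half_square_edges E W = {{x, y} | x y. x \<in> W \<and> y \<in> W \<and> x \<noteq> y \<and> {x, y} \<notin> E \<and>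
                                         (\<exists>z. {x, z} \<in> E \<and> {z, y} \<in> E)}"

definition corresponding_planar_bipartite ::
  "'a set \<Rightarrow> 'a set set \<Rightarrow> 'a set \<Rightarrow> 'a set \<Rightarrow> 'a set set \<Rightarrow> bool" where
  "corresponding_planar_bipartite VG EG W U EB \<longleftrightarrow>
     bipartite_with (W \<union> U) EB W U \<and> planar_graph (W \<union> U) EB \<and>
     VG = W \<and> EG = half_square_edges EB W"

end

theory Submission
  imports Defs
begin


lemma walk_single: "is_walk V E [x] \<longleftrightarrow> x \<in> V"
  by (simp add: is_walk_def)

lemma walk_Cons2: "is_walk V E (x # y # xs) \<longleftrightarrow> x \<in> V \<and> {x,y} \<in> E \<and> is_walk V E (y # xs)"
proof
  assume h: "is_walk V E (x # y # xs)"
  have "Suc 0 < length (x#y#xs)" by simp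
  then have "{(x#y#xs)!0, (x#y#xs)! Suc 0} \<in> E" using h unfolding is_walk_def by blast
  then have "{x,y} \<in> E" by simp
  moreover have "\<forall>i. Suc i < length (y # xs) \<longrightarrow> {(y#xs) ! i, (y#xs) ! Suc i} \<in> E"
  proof (intro allI impI)
    fix i assume "Suc i < length (y # xs)"
    then have "Suc (Suc i) < length (x # y # xs)" by simp
    then have "{(x#y#xs) ! Suc i, (x#y#xs) ! Suc (Suc i)} \<in> E" using h unfolding is_walk_def by blast
    then show "{(y#xs) ! i, (y#xs) ! Suc i} \<in> E" by simp
  qed
  ultimately show "x \<in> V \<and> {x,y} \<in> E \<and> is_walk V E (y # xs)" using h unfolding is_walk_def by auto
next
  assume h: "x \<in> V \<and> {x,y} \<in> E \<and> is_walk V E (y # xs)"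
  have "\<forall>i. Suc i < length (x # y # xs) \<longrightarrow> {(x#y#xs) ! i, (x#y#xs) ! Suc i} \<in> E"
  proof (intro allI impI)
    fix i assume a: "Suc i < length (x # y # xs)"
    show "{(x#y#xs) ! i, (x#y#xs) ! Suc i} \<in> E"
    proof (cases i)
      case 0 then show ?thesis using h by simp
    next
      case (Suc j)
      then have "Suc j < length (y # xs)" using a by simp
      then have "{(y#xs) ! j, (y#xs) ! Suc j} \<in> E" using h unfolding is_walk_def by blast
      then show ?thesis using Suc by simp
    qed
  qed
  then show "is_walk V E (x # y # xs)" using h unfolding is_walk_def by auto
qed

lemma walk_append: "xs \<noteq> [] \<Longrightarrow> is_walk V E (xs @ y # ys) \<longleftrightarrow> is_walk V E xs \<and> {last xs, y} \<in> E \<and> is_walk V E (y # ys)"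
proof (induction xs)
  case Nil then show ?case by simp
next
  case (Cons x xs)
  show ?case
  proof (cases xs)
    case Nil then show ?thesis by (simp add: walk_Cons2 walk_single)
  next
    case (Cons x' xs')
    then show ?thesis using Cons.IH by (auto simp: walk_Cons2)
  qed
qed

lemma walk_nonempty: "is_walk V E p \<Longrightarrow> p \<noteq> []" by (simp add: is_walk_def)

lemma walk_join:
  assumes "is_walk V E p" "is_walk V E q" "last p = hd q"
  shows "is_walk V E (p @ tl q) \<and> hd (p @ tl q) = hd p \<and> last (p @ tl q) = last q"
proof (cases q)
  case Nil then show ?thesis using assms walk_nonempty by blast
next
  case (Cons b q')
  show ?thesis
  proof (cases q')
    case Nil then show ?thesis using assms Cons walk_nonempty by auto
  next
    case (Cons y ys)
    have "is_walk V E (p @ y # ys)" using walk_append[of p V E y ys] assms \<open>q = b # q'\<close> Cons walk_nonempty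
      by (auto simp: walk_Cons2)
    moreover have "p \<noteq> []" using assms(1) walk_nonempty by blast
    ultimately show ?thesis using assms \<open>q = b # q'\<close> Cons by auto
  qed
qed

lemma walk_rev: "is_walk V E p \<Longrightarrow> is_walk V E (rev p)"
proof (induction p)
  case Nil then show ?case by (simp add: is_walk_def)
next
  case (Cons x p)
  show ?case
  proof (cases p)
    case Nil then show ?thesis using Cons by simp
  next
    case (Cons y ys)
    have w: "is_walk V E p" "{x,y} \<in> E" "x \<in> V" using Cons.prems Cons by (auto simp: walk_Cons2)
    have "is_walk V E (rev p @ x # [])"
      using walk_append[of "rev p" V E x "[]"] Cons.IH[OF w(1)] w Cons
      by (simp add: walk_single insert_commute)
    then show ?thesis by simp
  qed
qed

lemma path_rev: "is_path_between V E u w p \<Longrightarrow> is_path_between V E w u (rev p)"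
  unfolding is_path_between_def using walk_rev walk_nonempty
  by (metis distinct_rev hd_rev last_rev)

lemma walk_suffix: "is_walk V E (as @ bs) \<Longrightarrow> bs \<noteq> [] \<Longrightarrow> is_walk V E bs"
  by (metis append.left_neutral neq_Nil_conv walk_append)

lemma walk_prefix: "is_walk V E (as @ bs) \<Longrightarrow> as \<noteq> [] \<Longrightarrow> is_walk V E as"
  by (metis append.right_neutral neq_Nil_conv walk_append)

lemma walk_to_path: "is_walk V E p \<Longrightarrow> \<exists>q. is_path_between V E (hd p) (last p) q \<and> set q \<subseteq> set p"
proof (induction p)
  case Nil then show ?case by (simp add: is_walk_def)
next
  case (Cons x p)
  show ?case
  proof (cases p)
    case Nil then show ?thesis using Cons.prems
      by (intro exI[of _ "[x]"]) (simp add: is_path_between_def)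
  next
    case (Cons y ys)
    have w: "is_walk V E p" "{x,y} \<in> E" "x \<in> V" using Cons.prems Cons by (auto simp: walk_Cons2)
    obtain q' where q': "is_path_between V E (hd p) (last p) q'" "set q' \<subseteq> set p" using Cons.IH w by blast
    show ?thesis
    proof (cases "x \<in> set q'")
      case True
      then obtain as bs where qs: "q' = as @ x # bs" by (meson split_list)
      have "is_walk V E (x # bs)" using q' qs walk_suffix unfolding is_path_between_def by blast
      moreover have "distinct (x # bs)" using q' qs unfolding is_path_between_def by auto
      moreover have "last (x # bs) = last (x # p)" using q' qs Cons unfolding is_path_between_def by auto
      ultimately show ?thesis using q' qs
        by (intro exI[of _ "x # bs"]) (auto simp: is_path_between_def)
    next
      case False
      have q'ne: "q' \<noteq> []" using q' walk_nonempty unfolding is_path_between_def by blast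
      then obtain z zs where zq: "q' = z # zs" by (meson neq_Nil_conv)
      have "z = y" using q' zq Cons unfolding is_path_between_def by simp
      have wq: "is_walk V E q'" using q' unfolding is_path_between_def by blast
      have "{x,z} \<in> E" using w \<open>z = y\<close> by simp
      then have "is_walk V E (x # q')" using zq w(3) wq by (simp add: walk_Cons2)
      then show ?thesis using q' False Cons q'ne
        by (intro exI[of _ "x # q'"]) (auto simp: is_path_between_def)
    qed
  qed
qed

lemma walk_restrict: "is_walk V E p \<Longrightarrow> set p \<subseteq> X \<Longrightarrow> is_walk X {e\<in>E. e \<subseteq> X} p"
  unfolding is_walk_def by (auto intro: nth_mem)

lemma walk_mono: "is_walk X F p \<Longrightarrow> X \<subseteq> V \<Longrightarrow> F \<subseteq> E \<Longrightarrow> is_walk V E p"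
  unfolding is_walk_def by blast

lemma path_unique: "is_tree N ET \<Longrightarrow> is_path_between N ET u w p \<Longrightarrow> is_path_between N ET u w q \<Longrightarrow> p = q"
  unfolding is_tree_def is_path_between_def is_walk_def
  by (metis hd_in_set last_in_set subsetD)

lemma path_exists: "is_tree N ET \<Longrightarrow> u \<in> N \<Longrightarrow> w \<in> N \<Longrightarrow> \<exists>p. is_path_between N ET u w p"
  unfolding is_tree_def by blast

lemma path_in_conn:
  assumes "is_tree N ET" "induces_connected N ET X" "u \<in> X" "w \<in> X" "is_path_between N ET u w p"
  shows "set p \<subseteq> X"
proof -
  obtain p0 where p0: "is_walk X {e\<in>ET. e \<subseteq> X} p0" "hd p0 = u" "last p0 = w"
    using assms(2-4) unfolding induces_connected_def by blast
  from walk_to_path[OF p0(1)] obtain q where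
    q0: "is_path_between X {e\<in>ET. e \<subseteq> X} (hd p0) (last p0) q" and q2: "set q \<subseteq> set p0"
    by blast
  have q: "is_path_between X {e\<in>ET. e \<subseteq> X} u w q" using q0 p0(2,3) by simp
  have XN: "X \<subseteq> N" using assms(2) unfolding induces_connected_def by blast
  have wq: "is_walk X {e\<in>ET. e \<subseteq> X} q" and oth: "distinct q" "hd q = u" "last q = w"
    using q unfolding is_path_between_def by auto
  have "is_walk N ET q" using walk_mono[OF wq XN] by blast
  then have "is_path_between N ET u w q" using oth unfolding is_path_between_def by blast
  then have "p = q" using path_unique[OF assms(1) assms(5)] by blast
  then show ?thesis using wq unfolding is_walk_def by blast
qed

lemma path_union:
  assumes "is_tree N ET" "is_path_between N ET a b p" "is_path_between N ET b c q"
    "is_path_between N ET a c w"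
  shows "set w \<subseteq> set p \<union> set q"
proof -
  have p: "is_walk N ET p" "hd p = a" "last p = b" and q: "is_walk N ET q" "hd q = b" "last q = c"
    using assms(2,3) unfolding is_path_between_def by auto
  have j: "is_walk N ET (p @ tl q) \<and> hd (p @ tl q) = hd p \<and> last (p @ tl q) = last q"
    using walk_join[OF p(1) q(1)] p(3) q(2) by simp
  from walk_to_path[of N ET "p @ tl q"] j obtain w' where
    w0: "is_path_between N ET (hd (p @ tl q)) (last (p @ tl q)) w'" "set w' \<subseteq> set (p @ tl q)" by blast
  have w': "is_path_between N ET a c w'" using w0(1) j p(2) q(3) by simp
  have "w = w'" using path_unique[OF assms(1) assms(4) w'] .
  moreover have "set (tl q) \<subseteq> set q" by (cases q) auto
  ultimately show ?thesis using w0(2) by auto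
qed

lemma subpath: "is_path_between V E r t' p \<Longrightarrow> t \<in> set p \<Longrightarrow> \<exists>q. is_path_between V E t t' q \<and> set q \<subseteq> set p"
proof -
  assume a: "is_path_between V E r t' p" "t \<in> set p"
  then obtain as bs where s: "p = as @ t # bs" by (meson split_list)
  have "is_walk V E (t # bs)" using a s walk_suffix unfolding is_path_between_def by blast
  then show ?thesis using a s by (intro exI[of _ "t # bs"]) (auto simp: is_path_between_def)
qed

lemma entry:
  assumes "is_path_between V E r t p" "t \<in> X"
  shows "\<exists>u q. u \<in> X \<and> is_path_between V E r u q \<and> set q \<inter> X = {u}"
proof -
  have "p \<noteq> []" "last p = t" using assms walk_nonempty unfolding is_path_between_def by auto
  then have "\<exists>x\<in>set p. x \<in> X" using assms(2) last_in_set by metis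
  from split_list_first_prop[OF this] obtain ys x zs where s: "p = ys @ x # zs" "x \<in> X" "\<forall>y\<in>set ys. y \<notin> X"
    by blast
  have wp: "is_walk V E p" using assms unfolding is_path_between_def by blast
  have "is_walk V E (ys @ [x])"
  proof (cases "ys = []")
    case True then show ?thesis using wp s by (simp add: walk_single is_walk_def)
  next
    case False
    have "is_walk V E ys \<and> {last ys, x} \<in> E \<and> is_walk V E (x # zs)" using walk_append[OF False] wp s by blast
    then show ?thesis using walk_append[OF False, of V E x "[]"] by (simp add: walk_single is_walk_def)
  qed
  moreover have "hd (ys @ [x]) = r" using assms s unfolding is_path_between_def by (cases ys) auto
  moreover have "distinct (ys @ [x])" using assms s unfolding is_path_between_def by auto
  ultimately show ?thesis using s by (intro exI[of _ x] exI[of _ "ys @ [x]"]) (auto simp: is_path_between_def)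
qed

lemma concat_path:
  assumes "is_path_between V E r u p" "set p \<inter> X = {u}" "is_path_between V E u u' q" "set q \<subseteq> X"
  shows "is_path_between V E r u' (p @ tl q)"
proof -
  have p: "is_walk V E p" "hd p = r" "last p = u" "distinct p" and q: "is_walk V E q" "hd q = u" "last q = u'" "distinct q"
    using assms(1,3) unfolding is_path_between_def by auto
  have j: "is_walk V E (p @ tl q) \<and> hd (p @ tl q) = hd p \<and> last (p @ tl q) = last q"
    using walk_join[OF p(1) q(1)] p(3) q(2) by simp
  have qne: "q \<noteq> []" using q(1) walk_nonempty by blast
  then obtain b qs where qb: "q = b # qs" by (meson neq_Nil_conv)
  have "b = u" using q(2) qb by simp
  have "set qs \<subseteq> X" using assms(4) qb by simp
  moreover have "u \<notin> set qs" using q(4) qb \<open>b = u\<close> by simp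
  ultimately have dj: "y \<notin> set p" if "y \<in> set qs" for y
  proof -
    have yX: "y \<in> X" using that \<open>set qs \<subseteq> X\<close> by blast
    show ?thesis
    proof
      assume "y \<in> set p"
      then have "y \<in> set p \<inter> X" using yX by blast
      then have "y = u" using assms(2) by blast
      then show False using that \<open>u \<notin> set qs\<close> by simp
    qed
  qed
  then have "set qs \<inter> set p = {}" by blast
  then have "distinct (p @ tl q)" using p(4) q(4) qb by (simp add: Int_commute)
  then show ?thesis using j p q unfolding is_path_between_def by simp
qed



theorem lemma9:
  fixes VG :: "'v set" and EG :: "'v set set"
    and U :: "'v set" and EB :: "'v set set"
    and l :: nat
    and N :: "'t set" and ET :: "'t set set" and r :: 't
    and \<beta> :: "'t \<Rightarrow> 'v set" and \<beta>' :: "'t \<Rightarrow> 'v set"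
  assumes "corresponding_planar_bipartite VG EG VG U EB"
    and "tree_decomposition (VG \<union> U) EB N ET r \<beta>"
    and "td_width N \<beta> < int l"
    and "\<And>t. t \<in> N \<Longrightarrow> \<beta>' t = (\<beta> t \<inter> VG) \<union>
            (\<Union>s\<in>\<beta> t \<inter> U. nbhd EB s \<inter> gamma N ET r \<beta> t)"
  shows "tree_decomposition VG EG N ET r \<beta>'"
proof -
  have bip: "bipartite_with (VG \<union> U) EB VG U" and EG: "EG = half_square_edges EB VG"
    using assms(1) unfolding corresponding_planar_bipartite_def by auto
  have disj: "VG \<inter> U = {}" and card2: "\<And>e. e \<in> EB \<Longrightarrow> card e = 2"
    and eform: "\<And>e. e \<in> EB \<Longrightarrow> \<exists>w\<in>VG. \<exists>u\<in>U. e = {w, u}"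
    using bip unfolding bipartite_with_def simple_graph_def by auto
  have tree: "is_tree N ET" and rN: "r \<in> N" and bagV: "\<And>t. t \<in> N \<Longrightarrow> \<beta> t \<subseteq> VG \<union> U"
    and cov: "\<And>v. v \<in> VG \<union> U \<Longrightarrow> \<exists>t\<in>N. v \<in> \<beta> t"
    and ecov: "\<And>e. e \<in> EB \<Longrightarrow> \<exists>t\<in>N. e \<subseteq> \<beta> t"
    and conn: "\<And>v. v \<in> VG \<union> U \<Longrightarrow> induces_connected N ET {t\<in>N. v \<in> \<beta> t}"
    using assms(2) unfolding tree_decomposition_def by auto
  have nb: "v \<in> VG" if sU: "s \<in> U" and sv: "{s, v} \<in> EB" for s v
  proof -
    obtain w u where wu: "w \<in> VG" "u \<in> U" "{s, v} = {w, u}" using eform sv by blast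
    have "s \<noteq> v"
    proof
      assume "s = v" then have "card {s, v} = 1" by simp
      then show False using card2[OF sv] by simp
    qed
    then show ?thesis using wu disj sU by (metis disjoint_iff doubleton_eq_iff)
  qed
  have EBV: "e \<subseteq> VG \<union> U" if "e \<in> EB" for e using eform that by blast
  have desc_gamma: "\<beta> t' \<subseteq> gamma N ET r \<beta> t" if "t' \<in> N" "is_path_between N ET r t' p" "t \<in> set p" for t t' p
    using that unfolding gamma_def descendants_def by blast
  have bags: "\<beta>' t \<subseteq> VG" if "t \<in> N" for t
    using assms(4)[OF that] nb unfolding nbhd_def by auto
  have vcov: "\<exists>t\<in>N. v \<in> \<beta>' t" if vV0: "v \<in> VG" for v
  proof -
    obtain t where "t \<in> N" "v \<in> \<beta> t" using cov vV0 by blast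
    then show ?thesis using assms(4) vV0 by blast
  qed
  have ecov': "\<exists>t\<in>N. e \<subseteq> \<beta>' t" if eEG: "e \<in> EG" for e
  proof -
    obtain x y z where e: "e = {x, y}" "x \<in> VG" "y \<in> VG" "{x, z} \<in> EB" "{z, y} \<in> EB"
      using eEG EG unfolding half_square_edges_def by blast
    have zU: "z \<in> U"
    proof -
      obtain w u where wu: "w \<in> VG" "u \<in> U" "{x, z} = {w, u}" using eform e(4) by blast
      show ?thesis using wu disj e(2) by (metis disjoint_iff doubleton_eq_iff)
    qed
    define X where "X = {t\<in>N. z \<in> \<beta> t}"
    have cX: "induces_connected N ET X" unfolding X_def using conn zU by blast
    obtain tx where tx: "tx \<in> N" "{x, z} \<subseteq> \<beta> tx" using ecov e(4) by blast
    obtain ty where ty: "ty \<in> N" "{z, y} \<subseteq> \<beta> ty" using ecov e(5) by blast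
    obtain p where "is_path_between N ET r tx p" using path_exists[OF tree rN tx(1)] by blast
    moreover have "tx \<in> X" using tx X_def by simp
    ultimately obtain u q where u: "u \<in> X" "is_path_between N ET r u q" "set q \<inter> X = {u}"
      using entry[of N ET r tx p X] by blast
    have uN: "u \<in> N" using u X_def by simp
    have dsc: "\<beta> t \<subseteq> gamma N ET r \<beta> u" if tX0: "t \<in> X" for t
    proof -
      have tN: "t \<in> N" using tX0 X_def by simp
      obtain q2 where q2: "is_path_between N ET u t q2" using path_exists[OF tree uN tN] by blast
      have "set q2 \<subseteq> X" using path_in_conn[OF tree cX u(1) tX0 q2] .
      then have pt: "is_path_between N ET r t (q @ tl q2)" using concat_path[OF u(2) u(3) q2] by blast
      have "u \<in> set (q @ tl q2)" using u(3) by auto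
      then show ?thesis using desc_gamma tN pt by blast
    qed
    have "x \<in> gamma N ET r \<beta> u" using dsc tx X_def by auto
    moreover have "y \<in> gamma N ET r \<beta> u" using dsc ty X_def by auto
    moreover have "z \<in> \<beta> u \<inter> U" using u X_def zU by auto
    moreover have "x \<in> nbhd EB z" "y \<in> nbhd EB z" using e unfolding nbhd_def by (auto simp: insert_commute)
    ultimately have "{x, y} \<subseteq> \<beta>' u" using assms(4)[OF uN] by blast
    then show ?thesis using uN e by blast
  qed
  have conn': "induces_connected N ET {t\<in>N. v \<in> \<beta>' t}" if vV: "v \<in> VG" for v
  proof -
    define X' where "X' = {t\<in>N. v \<in> \<beta>' t}"
    define F' where "F' = {e\<in>ET. e \<subseteq> X'}"
    define Tv where "Tv = {t\<in>N. v \<in> \<beta> t}"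
    have TvX: "Tv \<subseteq> X'" unfolding Tv_def X'_def using assms(4) vV by auto
    have cTv: "induces_connected N ET Tv" unfolding Tv_def using conn vV by blast
    have C: "\<exists>t'\<in>Tv. \<exists>p. is_walk X' F' p \<and> hd p = t \<and> last p = t'" if tX: "t \<in> X'" for t
    proof (cases "v \<in> \<beta> t")
      case True
      then have "t \<in> Tv" using tX X'_def Tv_def by simp
      moreover have "is_walk X' F' [t]" using tX by (simp add: walk_single)
      ultimately show ?thesis by force
    next
      case False
      have tN: "t \<in> N" using tX X'_def by simp
      obtain s where s: "s \<in> \<beta> t \<inter> U" "v \<in> nbhd EB s" "v \<in> gamma N ET r \<beta> t"
        using False tX assms(4)[OF tN] unfolding X'_def by auto
      obtain t' pr where t': "t' \<in> N" "v \<in> \<beta> t'" "is_path_between N ET r t' pr" "t \<in> set pr"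
        using s(3) unfolding gamma_def descendants_def by blast
      have sv: "{s, v} \<in> EB" using s(2) unfolding nbhd_def by simp
      obtain te where te: "te \<in> N" "{s, v} \<subseteq> \<beta> te" using ecov sv by blast
      define Ts where "Ts = {t\<in>N. s \<in> \<beta> t}"
      have cTs: "induces_connected N ET Ts" unfolding Ts_def using conn s(1) by blast
      obtain q where q: "is_path_between N ET t t' q" "set q \<subseteq> set pr" using subpath[OF t'(3) t'(4)] by blast
      obtain q1 where q1: "is_path_between N ET t te q1" using path_exists[OF tree tN te(1)] by blast
      obtain q2 where q2: "is_path_between N ET te t' q2" using path_exists[OF tree te(1) t'(1)] by blast
      have "set q1 \<subseteq> Ts" using path_in_conn[OF tree cTs _ _ q1] s te tN Ts_def by auto
      moreover have "set q2 \<subseteq> Tv" using path_in_conn[OF tree cTv _ _ q2] t' te Tv_def by auto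
      ultimately have qU: "set q \<subseteq> Ts \<union> Tv" using path_union[OF tree q1 q2 q(1)] by blast
      have "set q \<subseteq> X'"
      proof
        fix w assume w: "w \<in> set q"
        show "w \<in> X'"
        proof (cases "w \<in> Tv")
          case True then show ?thesis using TvX by blast
        next
          case False
          then have wTs: "w \<in> Ts" using qU w by blast
          then have wN: "w \<in> N" using Ts_def by simp
          have "w \<in> set pr" using q w by blast
          then have "v \<in> gamma N ET r \<beta> w" using desc_gamma t' by blast
          then have "v \<in> \<beta>' w" using assms(4)[OF wN] wTs s Ts_def by auto
          then show ?thesis using wN X'_def by simp
        qed
      qed
      then have "is_walk X' F' q" using walk_restrict q(1) unfolding F'_def is_path_between_def by blast
      then show ?thesis using q t' Tv_def unfolding is_path_between_def by blast
    qed
    have XN: "X' \<subseteq> N" using X'_def by blast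
    have "\<exists>p. is_walk X' F' p \<and> hd p = a \<and> last p = b" if ab: "a \<in> X'" "b \<in> X'" for a b
    proof -
      obtain ta pa where pa: "ta \<in> Tv" "is_walk X' F' pa" "hd pa = a" "last pa = ta" using C ab by blast
      obtain tb pb where pb: "tb \<in> Tv" "is_walk X' F' pb" "hd pb = b" "last pb = tb" using C ab by blast
      obtain pab where pab: "is_walk Tv {e\<in>ET. e \<subseteq> Tv} pab" "hd pab = ta" "last pab = tb"
        using cTv pa pb unfolding induces_connected_def by blast
      have FF: "{e\<in>ET. e \<subseteq> Tv} \<subseteq> F'" unfolding F'_def using TvX by blast
      have pab': "is_walk X' F' pab" using walk_mono[OF pab(1) TvX FF] .
      have prb: "is_walk X' F' (rev pb)" "hd (rev pb) = tb" "last (rev pb) = b"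
        using walk_rev pb walk_nonempty by (auto simp: hd_rev last_rev)
      obtain p1 where p1: "is_walk X' F' p1" "hd p1 = a" "last p1 = tb"
        using walk_join[OF pa(2) pab'] pa pab by auto
      obtain p2 where p2: "is_walk X' F' p2" "hd p2 = a" "last p2 = b"
        using walk_join[OF p1(1) prb(1)] p1 prb by auto
      then show ?thesis by blast
    qed
    then show ?thesis unfolding induces_connected_def X'_def F'_def using XN X'_def by blast
  qed
  show ?thesis unfolding tree_decomposition_def
    using tree rN bags vcov ecov' conn' by blast
qed

end
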